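(* Let $P$ and $Q$ be tangent planes in $\mathbb{H}^4$, i.e. distinct planes that are disjoint in $\mathbb{H}^4$ and whose boundaries at infinity meet in exactly one point. Then $H_PH_Q$ is a parabolic isometry.
   Context: A plane is a $2$-dimensional totally geodesic subspace of $\mathbb{H}^4$. For a plane $P$, the half-turn $H_P$ is the composition of reflections in two orthogonal hyperplanes intersecting in $P$. *)

theory Defs
  imports "HOL-Analysis.Analysis"
begin

text \<open>Hyperboloid model of hyperbolic 4-space inside Minkowski space
  R^{4,1} = real^4 \<times> real (space part, time part).\<close>

type_synonym mpt = "(real^4) \<times> real"

definition mink :: "mpt \<Rightarrow> mpt \<Rightarrow> real" where
  "mink p q = fst p \<bullet> fst q - snd p * snd q"

definition H4 :: "mpt set" where
  "H4 = {p. mink p p = -1 \<and> snd p > 0}"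

text \<open>A plane (2-dimensional totally geodesic subspace): nonempty
  intersection of H4 with a 3-dimensional linear subspace.\<close>
definition is_plane :: "mpt set \<Rightarrow> bool" where
  "is_plane P \<longleftrightarrow> (\<exists>V. subspace V \<and> dim V = 3 \<and> P = V \<inter> H4 \<and> P \<noteq> {})"

definition hyperplane :: "mpt \<Rightarrow> mpt set" where
  "hyperplane n = {p \<in> H4. mink n p = 0}"

definition refl :: "mpt \<Rightarrow> mpt \<Rightarrow> mpt" where
  "refl n p = p - (2 * mink p n / mink n n) *\<^sub>R n"

definition is_half_turn :: "mpt set \<Rightarrow> (mpt \<Rightarrow> mpt) \<Rightarrow> bool" where
  "is_half_turn P f \<longleftrightarrow> (\<exists>n1 n2. mink n1 n1 > 0 \<and> mink n2 n2 > 0 \<and> mink n1 n2 = 0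
      \<and> hyperplane n1 \<inter> hyperplane n2 = P \<and> f = refl n1 \<circ> refl n2)"

text \<open>Boundary at infinity, via the Klein (projective) model: the ideal
  boundary is the unit sphere of real^4.\<close>
definition klein :: "mpt \<Rightarrow> real^4" where
  "klein p = (1 / snd p) *\<^sub>R fst p"

definition bdry_inf :: "mpt set \<Rightarrow> (real^4) set" where
  "bdry_inf S = closure (klein ` S) \<inter> sphere 0 1"

text \<open>An ideal point xi (unit vector) is fixed by a (linear) isometry f
  iff f maps the null ray through (xi,1) to itself.\<close>
definition fixes_ideal :: "(mpt \<Rightarrow> mpt) \<Rightarrow> real^4 \<Rightarrow> bool" where
  "fixes_ideal f xi \<longleftrightarrow> xi \<in> sphere 0 1 \<and> (\<exists>c>0. f (xi, 1) = c *\<^sub>R (xi, 1))"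

definition parabolic :: "(mpt \<Rightarrow> mpt) \<Rightarrow> bool" where
  "parabolic f \<longleftrightarrow> (\<forall>p\<in>H4. f p \<noteq> p) \<and> (\<exists>!xi. fixes_ideal f xi)"

end

theory Submission
  imports Defs
begin

lemma mink_sym: "mink x y = mink y x"
  by (simp add: mink_def inner_commute mult.commute)

lemma mink_add1[simp]: "mink (x + y) z = mink x z + mink y z"
  by (simp add: mink_def inner_add_left algebra_simps)
lemma mink_add2[simp]: "mink z (x + y) = mink z x + mink z y"
  by (simp add: mink_def inner_add_right algebra_simps)
lemma mink_diff1[simp]: "mink (x - y) z = mink x z - mink y z"
  by (simp add: mink_def inner_diff_left algebra_simps)
lemma mink_diff2[simp]: "mink z (x - y) = mink z x - mink z y"
  by (simp add: mink_def inner_diff_right algebra_simps)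
lemma mink_scale1[simp]: "mink (c *\<^sub>R x) z = c * mink x z"
  by (simp add: mink_def algebra_simps)
lemma mink_scale2[simp]: "mink z (c *\<^sub>R x) = c * mink z x"
  by (simp add: mink_def algebra_simps)

definition ht :: "mpt \<Rightarrow> mpt \<Rightarrow> mpt \<Rightarrow> mpt" where
  "ht n1 n2 x = x - (2 * mink x n2 / mink n2 n2) *\<^sub>R n2 - (2 * mink x n1 / mink n1 n1) *\<^sub>R n1"

lemma refl_iso: "mink n n \<noteq> 0 \<Longrightarrow> mink (refl n x) (refl n y) = mink x y"
proof -
  assume N: "mink n n \<noteq> 0"
  define a where "a = 2 * mink x n / mink n n"
  define b where "b = 2 * mink y n / mink n n"
  have "mink (refl n x) (refl n y) = mink x y - b * mink x n - a * mink n y + a * b * mink n n"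
    unfolding refl_def a_def[symmetric] b_def[symmetric] by (simp add: algebra_simps)
  also have "a * b * mink n n = 4 * mink x n * mink y n / mink n n"
    using N by (simp add: a_def b_def)
  finally show ?thesis using N by (simp add: a_def b_def mink_sym[of n y] add_divide_distrib diff_divide_distrib)
qed

lemma ht_eq: "mink n1 n2 = 0 \<Longrightarrow> refl n1 (refl n2 x) = ht n1 n2 x"
  unfolding refl_def ht_def by (simp add: mink_sym[of n2 n1] algebra_simps)

lemma ht_orth1: "mink n1 n1 > 0 \<Longrightarrow> mink n2 n2 > 0 \<Longrightarrow> mink n1 n2 = 0 \<Longrightarrow>
   mink (ht n1 n2 x) n1 = - mink x n1"
  unfolding ht_def by (simp add: mink_sym[of n2 n1])

lemma ht_orth2: "mink n1 n1 > 0 \<Longrightarrow> mink n2 n2 > 0 \<Longrightarrow> mink n1 n2 = 0 \<Longrightarrow>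
   mink (ht n1 n2 x) n2 = - mink x n2"
  unfolding ht_def by simp

lemma ht_inv: "mink n1 n1 > 0 \<Longrightarrow> mink n2 n2 > 0 \<Longrightarrow> mink n1 n2 = 0 \<Longrightarrow>
   ht n1 n2 (ht n1 n2 x) = x"
  apply (subst (1) ht_def)
  apply (simp add: ht_orth1 ht_orth2)
  apply (simp add: ht_def)
  done

lemma ht_add: "ht n1 n2 (x + y) = ht n1 n2 x + ht n1 n2 y"
  unfolding ht_def by (simp add: add_divide_distrib distrib_left scaleR_add_left algebra_simps)

lemma ht_scale: "ht n1 n2 (c *\<^sub>R x) = c *\<^sub>R ht n1 n2 x"
  unfolding ht_def by (simp add: algebra_simps)

lemma ht_self: "mink n1 n1 > 0 \<Longrightarrow> mink n2 n2 > 0 \<Longrightarrow>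
   mink x (ht n1 n2 x) \<le> mink x x"
proof -
  assume a: "mink n1 n1 > 0" "mink n2 n2 > 0"
  have "mink x (ht n1 n2 x) = mink x x - 2 * (mink x n2)^2 / mink n2 n2 - 2 * (mink x n1)^2 / mink n1 n1"
    unfolding ht_def by (simp add: power2_eq_square)
  moreover have "(mink x n2)^2 / mink n2 n2 \<ge> 0" "(mink x n1)^2 / mink n1 n1 \<ge> 0"
    using a by auto
  ultimately show ?thesis by linarith
qed

lemma ht_self_eq: "mink n1 n1 > 0 \<Longrightarrow> mink n2 n2 > 0 \<Longrightarrow>
   mink x (ht n1 n2 x) = mink x x \<Longrightarrow> mink x n1 = 0 \<and> mink x n2 = 0"
proof -
  assume a: "mink n1 n1 > 0" "mink n2 n2 > 0" and e: "mink x (ht n1 n2 x) = mink x x"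
  have "mink x (ht n1 n2 x) = mink x x - 2 * (mink x n2)^2 / mink n2 n2 - 2 * (mink x n1)^2 / mink n1 n1"
    unfolding ht_def by (simp add: power2_eq_square)
  moreover have "(mink x n2)^2 / mink n2 n2 \<ge> 0" "(mink x n1)^2 / mink n1 n1 \<ge> 0"
    using a by auto
  ultimately have "(mink x n2)^2 / mink n2 n2 = 0" "(mink x n1)^2 / mink n1 n1 = 0"
    using e by linarith+
  thus ?thesis using a by auto
qed

lemma timelike_norm:
  assumes "mink v v < 0"
  shows "\<exists>c. c *\<^sub>R v \<in> H4"
proof -
  have t: "snd v \<noteq> 0"
  proof
    assume "snd v = 0"
    hence "mink v v = fst v \<bullet> fst v" by (simp add: mink_def)
    thus False using assms by (simp add: inner_ge_zero leD)
  qed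
  define s where "s = sqrt (- mink v v)"
  have s: "s > 0" "s^2 = - mink v v" using assms by (auto simp: s_def)
  define c where "c = sgn (snd v) / s"
  have "mink (c *\<^sub>R v) (c *\<^sub>R v) = c^2 * mink v v" by (simp add: power2_eq_square)
  also have "c^2 = 1 / s^2" using t by (simp add: c_def power_divide sgn_if)
  finally have 1: "mink (c *\<^sub>R v) (c *\<^sub>R v) = -1" using s assms by simp
  have "snd (c *\<^sub>R v) = \<bar>snd v\<bar> / s" using t by (simp add: c_def sgn_if)
  hence "snd (c *\<^sub>R v) > 0" using s t by simp
  with 1 show ?thesis by (auto simp: H4_def)
qed

lemma bd_orth:
  assumes "\<xi> \<in> closure (klein ` S)" and "\<And>p. p \<in> S \<Longrightarrow> mink n p = 0 \<and> snd p > 0"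
  shows "mink n (\<xi>, 1) = 0"
proof -
  have "klein ` S \<subseteq> {y. fst n \<bullet> y = snd n}"
  proof
    fix y assume "y \<in> klein ` S"
    then obtain p where p: "p \<in> S" "y = klein p" by auto
    have "fst n \<bullet> fst p = snd n * snd p" using assms(2)[OF p(1)] by (simp add: mink_def)
    thus "y \<in> {y. fst n \<bullet> y = snd n}" using assms(2)[OF p(1)] p(2)
      by (simp add: klein_def inner_scaleR_right)
  qed
  hence "closure (klein ` S) \<subseteq> {y. fst n \<bullet> y = snd n}"
    by (intro closure_minimal) (auto intro: closed_hyperplane)
  with assms(1) show ?thesis by (auto simp: mink_def)
qed

lemma H4_snd: "p \<in> H4 \<Longrightarrow> snd p > 0" by (simp add: H4_def)

theorem lemma6p4:
  fixes P Q :: "mpt set" and hP hQ :: "mpt \<Rightarrow> mpt"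
  assumes "is_plane P" and "is_plane Q"
    and "P \<noteq> Q" and "P \<inter> Q = {}"
    and "\<exists>\<xi>. bdry_inf P \<inter> bdry_inf Q = {\<xi>}"
    and "is_half_turn P hP" and "is_half_turn Q hQ"
  shows "parabolic (hP \<circ> hQ)"
proof -
  obtain n1 n2 where n: "mink n1 n1 > 0" "mink n2 n2 > 0" "mink n1 n2 = 0"
    "hyperplane n1 \<inter> hyperplane n2 = P" "hP = refl n1 \<circ> refl n2"
    using assms(6) unfolding is_half_turn_def by blast
  obtain m1 m2 where m: "mink m1 m1 > 0" "mink m2 m2 > 0" "mink m1 m2 = 0"
    "hyperplane m1 \<inter> hyperplane m2 = Q" "hQ = refl m1 \<circ> refl m2"
    using assms(7) unfolding is_half_turn_def by blast
  have hPe: "\<And>x. hP x = ht n1 n2 x" using n by (simp add: ht_eq)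
  have hQe: "\<And>x. hQ x = ht m1 m2 x" using m by (simp add: ht_eq)
  have isoP: "\<And>x y. mink (hP x) (hP y) = mink x y" using n by (simp add: refl_iso)
  have isoQ: "\<And>x y. mink (hQ x) (hQ y) = mink x y" using m by (simp add: refl_iso)
  have invP: "\<And>x. hP (hP x) = x" unfolding hPe using n(1-3) by (simp add: ht_inv)
  have invQ: "\<And>x. hQ (hQ x) = x" unfolding hQe using m(1-3) by (simp add: ht_inv)
  have addP: "\<And>x y. hP (x + y) = hP x + hP y" by (simp add: hPe ht_add)
  have addQ: "\<And>x y. hQ (x + y) = hQ x + hQ y" by (simp add: hQe ht_add)
  have fixP: "\<And>v. hP v = v \<Longrightarrow> mink v n1 = 0 \<and> mink v n2 = 0"
  proof -
    fix v assume "hP v = v"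
    hence "ht n1 n2 v = v" by (simp add: hPe)
    thus "mink v n1 = 0 \<and> mink v n2 = 0"
      using ht_orth1[OF n(1-3), of v] ht_orth2[OF n(1-3), of v] by simp
  qed
  have fixQ: "\<And>v. hQ v = v \<Longrightarrow> mink v m1 = 0 \<and> mink v m2 = 0"
  proof -
    fix v assume "hQ v = v"
    hence "ht m1 m2 v = v" by (simp add: hQe)
    thus "mink v m1 = 0 \<and> mink v m2 = 0"
      using ht_orth1[OF m(1-3), of v] ht_orth2[OF m(1-3), of v] by simp
  qed
  have W: "mink v v \<ge> 0" if "mink v n1 = 0" "mink v n2 = 0" "mink v m1 = 0" "mink v m2 = 0" for v
  proof (rule ccontr)
    assume "\<not> mink v v \<ge> 0"
    hence "mink v v < 0" by simp
    then obtain c where c: "c *\<^sub>R v \<in> H4" using timelike_norm by blast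
    hence "c *\<^sub>R v \<in> P" "c *\<^sub>R v \<in> Q" using that n(4) m(4)
      by (auto simp: hyperplane_def mink_sym[of _ v])
    thus False using assms(4) by blast
  qed
  have selfP: "\<And>x. mink x (hP x) \<le> mink x x" unfolding hPe using n(1-3) by (simp add: ht_self)
  have selfQ: "\<And>x. mink x (hQ x) \<le> mink x x" unfolding hQe using m(1-3) by (simp add: ht_self)
  have nofix: "\<forall>p\<in>H4. (hP \<circ> hQ) p \<noteq> p"
  proof (intro ballI notI)
    fix p assume p: "p \<in> H4" and fp: "(hP \<circ> hQ) p = p"
    have "hP (hP (hQ p)) = hP p" using fp by simp
    hence eq: "hQ p = hP p" using invP by simp
    define q where "q = hP p"
    have "hP (p + q) = p + q" by (simp add: addP invP q_def add.commute)
    moreover have "hQ (p + q) = p + q" by (simp add: addQ invQ q_def eq[symmetric] add.commute)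
    ultimately have "mink (p+q) (p+q) \<ge> 0" using fixP fixQ W by blast
    moreover have "mink p p = -1" using p by (simp add: H4_def)
    moreover have "mink q q = -1" using p isoP by (simp add: q_def H4_def)
    moreover have "mink p q \<le> -1" using selfP[of p] p by (simp add: q_def H4_def)
    ultimately show False by (simp add: mink_sym[of q p])
  qed
  obtain \<xi> where xi: "bdry_inf P \<inter> bdry_inf Q = {\<xi>}" using assms(5) by blast
  hence xiP: "\<xi> \<in> closure (klein ` P)" and xiQ: "\<xi> \<in> closure (klein ` Q)"
    and xin: "norm \<xi> = 1" by (auto simp: bdry_inf_def)
  define e0 where "e0 = (\<xi>, 1::real)"
  have e0o: "mink e0 n1 = 0" "mink e0 n2 = 0" "mink e0 m1 = 0" "mink e0 m2 = 0"
    unfolding e0_def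
    using bd_orth[OF xiP, of n1] bd_orth[OF xiP, of n2] bd_orth[OF xiQ, of m1] bd_orth[OF xiQ, of m2]
      n(4) m(4) by (auto simp: hyperplane_def H4_def e0_def mink_sym[of "(\<xi>,1)"])
  have fe0: "(hP \<circ> hQ) e0 = e0"
    using e0o by (simp add: hPe hQe ht_def)
  have ex: "fixes_ideal (hP \<circ> hQ) \<xi>"
    unfolding fixes_ideal_def using xin fe0 by (auto simp: e0_def intro: exI[of _ 1])
  have uniq: "\<eta> = \<xi>" if fi: "fixes_ideal (hP \<circ> hQ) \<eta>" for \<eta>
  proof -
    obtain c where c: "c > 0" "(hP \<circ> hQ) (\<eta>,1) = c *\<^sub>R (\<eta>,1)" and etan: "norm \<eta> = 1"
      using fi unfolding fixes_ideal_def by auto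
    define e where "e = (\<eta>, 1::real)"
    have ee: "mink e e = 0" using etan by (simp add: e_def mink_def power2_norm_eq_inner[symmetric])
    have key: "mink e0 e \<ge> 0"
    proof (cases "c = 1")
      case True
      hence "hP (hP (hQ e)) = hP e" using c by (simp add: e_def)
      hence eq: "hQ e = hP e" using invP by simp
      define q where "q = hP e"
      have "hP (e + q) = e + q" by (simp add: addP invP q_def add.commute)
      moreover have "hQ (e + q) = e + q" by (simp add: addQ invQ q_def eq[symmetric] add.commute)
      ultimately have "mink (e+q) (e+q) \<ge> 0" using fixP fixQ W by blast
      moreover have "mink q q = 0" using ee isoP by (simp add: q_def)
      ultimately have "mink e q \<ge> 0" using ee by (simp add: mink_sym[of q e])
      hence "mink e (hP e) = mink e e" "mink e (hQ e) = mink e e"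
        using selfP[of e] ee eq by (simp_all add: q_def)
      hence o: "mink e n1 = 0 \<and> mink e n2 = 0" "mink e m1 = 0 \<and> mink e m2 = 0"
        using ht_self_eq[OF n(1,2)] ht_self_eq[OF m(1,2)] by (simp_all add: hPe hQe)
      have "mink (e + e0) (e + e0) \<ge> 0" using o e0o W[of "e+e0"] by simp
      moreover have "mink e0 e0 = 0" using xin by (simp add: e0_def mink_def power2_norm_eq_inner[symmetric])
      ultimately show ?thesis using ee by (simp add: mink_sym[of e e0])
    next
      case False
      have "mink ((hP \<circ> hQ) e0) ((hP \<circ> hQ) e) = mink e0 e" by (simp add: isoP isoQ)
      moreover have "(hP \<circ> hQ) e = c *\<^sub>R e" using c(2) by (simp only: e_def)
      ultimately have "mink e0 (c *\<^sub>R e) = mink e0 e" using fe0 by simp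
      hence "c * mink e0 e = mink e0 e" by (simp only: mink_scale2)
      hence "mink e0 e = 0" using False by simp
      thus ?thesis by simp
    qed
    hence "\<xi> \<bullet> \<eta> \<ge> 1" by (simp add: mink_def e0_def e_def)
    moreover have "\<xi> \<bullet> \<xi> = 1" "\<eta> \<bullet> \<eta> = 1" using xin etan by (simp_all add: power2_norm_eq_inner[symmetric])
    ultimately have "norm (\<xi> - \<eta>)^2 \<le> 0"
      by (simp add: power2_norm_eq_inner inner_diff_left inner_diff_right inner_commute)
    thus ?thesis by simp
  qed
  show ?thesis unfolding parabolic_def using nofix ex uniq by blast
qed

end
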